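(* For $R>0$, let $s(R)=\tanh\frac R2$. Then the geodesic ball of radius $R$ about $\mathbf 0$ with respect to $g_{\tilde B}$ equals the Euclidean ball of radius $s(R)$ about $\mathbf 0$: $B^{g_{\tilde B}}_R(\mathbf 0)=B^{\mathbb R}_{s(R)}(\mathbf 0)$.
   Context: On the open unit ball $\mathbb B^{2n+2}\subset\mathbb R^{2n+2}\cong\mathbb C^{n+1}$ (coordinates $z_j=x_j+iy_j$, $r=|z|$), let $\theta=r^{-2}\sum_j(x_jdy_j-y_jdx_j)$ and let $g_{\tilde B}=\frac{4}{(1-r^2)^2}g_{\mathbb R}+\frac{16r^4}{(1-r^2)^4}\theta^2$ be the modified Bergman metric, where $g_{\mathbb R}$ is the Euclidean metric. *)

theory Defs
  imports "HOL-Analysis.Analysis"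
begin

text \<open>We identify \<real>^(2n+2) with \<complex>^(n+1), modelled as complex^'n for a finite index type 'n
  (so n+1 = CARD('n) \<ge> 1 is arbitrary). The norm and inner product of complex^'n are the
  Euclidean ones of \<real>^(2n+2), with z_j = x_j + i y_j.\<close>

definition theta_form :: "complex^'n \<Rightarrow> complex^'n \<Rightarrow> real" where
  "theta_form z v = (1 / (norm z)^2) * (\<Sum>j\<in>UNIV. Re (z$j) * Im (v$j) - Im (z$j) * Re (v$j))"

definition g_Btilde :: "complex^'n \<Rightarrow> complex^'n \<Rightarrow> complex^'n \<Rightarrow> real" where
  "g_Btilde z v w = 4 / (1 - (norm z)^2)^2 * (v \<bullet> w)
     + 16 * (norm z)^4 / (1 - (norm z)^2)^4 * theta_form z v * theta_form z w"

definition admissible_lengths :: "complex^'n \<Rightarrow> complex^'n \<Rightarrow> real set" where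
  "admissible_lengths p q = {L. \<exists>\<gamma>. \<gamma> piecewise_C1_differentiable_on {0..1} \<and>
      \<gamma> 0 = p \<and> \<gamma> 1 = q \<and> path_image \<gamma> \<subseteq> ball 0 1 \<and>
      ((\<lambda>t. sqrt (g_Btilde (\<gamma> t) (vector_derivative \<gamma> (at t)) (vector_derivative \<gamma> (at t))))
         has_integral L) {0..1}}"

definition dist_Btilde :: "complex^'n \<Rightarrow> complex^'n \<Rightarrow> real" where
  "dist_Btilde p q = Inf (admissible_lengths p q)"

definition geod_ball_Btilde :: "complex^'n \<Rightarrow> real \<Rightarrow> (complex^'n) set" where
  "geod_ball_Btilde x R = {p \<in> ball 0 1. dist_Btilde x p < R}"

end

theory Submission
  imports Defs
begin

lemma g_lower:
  fixes z v :: "complex^'n"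
  assumes "norm z < 1"
  shows "2 * norm v / (1 - (norm z)^2) \<le> sqrt (g_Btilde z v v)"
proof -
  have pos: "1 - (norm z)^2 > 0" using assms
    by (metis abs_norm_cancel abs_square_less_1 diff_gt_0_iff_gt)
  have "(2 * norm v / (1 - (norm z)^2))^2 = 4 / (1 - (norm z)^2)^2 * (v \<bullet> v)"
    by (simp add: power_divide power_mult_distrib power2_norm_eq_inner)
  also have "\<dots> \<le> g_Btilde z v v"
    unfolding g_Btilde_def using pos
    by (simp add: mult.assoc)
  finally have "(2 * norm v / (1 - (norm z)^2))^2 \<le> g_Btilde z v v" .
  then have "sqrt ((2 * norm v / (1 - (norm z)^2))^2) \<le> sqrt (g_Btilde z v v)"
    using real_sqrt_le_mono by blast
  then show ?thesis using pos by simp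
qed

lemma lower_bound:
  fixes p :: "complex^'n"
  assumes "L \<in> admissible_lengths 0 p"
  shows "2 * artanh (norm p) \<le> L \<and> norm p < 1"
proof -
  obtain \<gamma> where pc: "\<gamma> piecewise_C1_differentiable_on {0..1}" and g0: "\<gamma> 0 = 0"
    and g1: "\<gamma> 1 = p" and img: "path_image \<gamma> \<subseteq> ball 0 1"
    and int: "((\<lambda>t. sqrt (g_Btilde (\<gamma> t) (vector_derivative \<gamma> (at t)) (vector_derivative \<gamma> (at t))))
         has_integral L) {0..1}"
    using assms unfolding admissible_lengths_def by blast
  have inb: "norm (\<gamma> t) < 1" if "t \<in> {0..1}" for t
    using img that unfolding path_image_def by (force simp: subset_iff dist_norm)
  have p1: "norm p < 1" using inb[of 1] g1 by simp
  define u where "u = sgn p"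
  have nu: "norm u \<le> 1" unfolding u_def by (simp add: norm_sgn)
  have pu: "p \<bullet> u = norm p" unfolding u_def
    by (cases "p = 0") (simp_all add: sgn_div_norm inner_commute field_simps flip: power2_norm_eq_inner, simp add: power2_eq_square)
  have cs: "\<bar>x \<bullet> u\<bar> \<le> norm x" for x :: "complex^'n"
    using Cauchy_Schwarz_ineq2[of x u] nu
    by (metis mult.comm_neutral mult_left_mono norm_ge_zero order.trans)
  have hb: "\<bar>\<gamma> t \<bullet> u\<bar> < 1" if "t \<in> {0..1}" for t
    using cs[of "\<gamma> t"] inb[OF that] by linarith
  obtain S where S: "finite S" and C1: "\<gamma> C1_differentiable_on {0..1} - S"
    and cont: "continuous_on {0..1} \<gamma>"
    using pc unfolding piecewise_C1_differentiable_on_def by blast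
  define \<phi>' where "\<phi>' t = 2 * (vector_derivative \<gamma> (at t) \<bullet> u) / (1 - (\<gamma> t \<bullet> u)^2)" for t
  have ftc: "(\<phi>' has_integral (2 * artanh (\<gamma> 1 \<bullet> u) - 2 * artanh (\<gamma> 0 \<bullet> u))) {0..1}"
  proof (rule fundamental_theorem_of_calculus_interior_strong[OF S])
    show "continuous_on {0..1} (\<lambda>t. 2 * artanh (\<gamma> t \<bullet> u))"
      using hb by (intro continuous_intros cont) (force simp: abs_less_iff)+
    fix t assume t: "t \<in> {0<..<1} - S"
    then have tt: "t \<in> {0..1}" by auto
    obtain D where D: "\<And>x. x \<in> {0..1} - S \<Longrightarrow> (\<gamma> has_vector_derivative D x) (at x)"
      using C1 unfolding C1_differentiable_on_def by blast
    have tS: "t \<in> {0..1} - S" using t by auto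
    have dv: "(\<gamma> has_vector_derivative vector_derivative \<gamma> (at t)) (at t)"
      using D[OF tS] vector_derivative_at[OF D[OF tS]] by simp
    have "((\<lambda>t. \<gamma> t \<bullet> u) has_real_derivative (vector_derivative \<gamma> (at t) \<bullet> u)) (at t)"
      using dv unfolding has_vector_derivative_def has_field_derivative_def
      by (auto intro!: derivative_eq_intros simp: inner_scaleR_left)
    then have "((\<lambda>t. 2 * artanh (\<gamma> t \<bullet> u)) has_real_derivative \<phi>' t) (at t)"
      unfolding \<phi>'_def using hb[OF tt]
      by (auto intro!: derivative_eq_intros DERIV_chain2[OF artanh_real_has_field_derivative])
    then show "((\<lambda>t. 2 * artanh (\<gamma> t \<bullet> u)) has_vector_derivative \<phi>' t) (at t)"
      by (simp add: has_real_derivative_iff_has_vector_derivative)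
  qed simp
  have le: "\<phi>' t \<le> sqrt (g_Btilde (\<gamma> t) (vector_derivative \<gamma> (at t)) (vector_derivative \<gamma> (at t)))"
    if t: "t \<in> {0..1}" for t
  proof -
    let ?v = "vector_derivative \<gamma> (at t)"
    have a: "1 - (norm (\<gamma> t))^2 > 0" using inb[OF t]
      by (metis abs_norm_cancel abs_square_less_1 diff_gt_0_iff_gt)
    have b: "(norm (\<gamma> t))^2 \<ge> (\<gamma> t \<bullet> u)^2"
      using cs[of "\<gamma> t"] by (metis abs_le_square_iff abs_norm_cancel)
    have "\<phi>' t \<le> 2 * norm ?v / (1 - (\<gamma> t \<bullet> u)^2)"
      unfolding \<phi>'_def using cs[of ?v] a b
      by (intro divide_right_mono) auto
    also have "\<dots> \<le> 2 * norm ?v / (1 - (norm (\<gamma> t))^2)"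
      using a b by (intro divide_left_mono) auto
    also have "\<dots> \<le> sqrt (g_Btilde (\<gamma> t) ?v ?v)" by (rule g_lower[OF inb[OF t]])
    finally show ?thesis .
  qed
  have "2 * artanh (\<gamma> 1 \<bullet> u) - 2 * artanh (\<gamma> 0 \<bullet> u) \<le> L"
    by (rule has_integral_le[OF ftc int]) (use le in auto)
  then show ?thesis using g0 g1 pu p1 by simp
qed

lemma radial:
  fixes p :: "complex^'n"
  assumes "norm p < 1"
  shows "2 * artanh (norm p) \<in> admissible_lengths 0 p"
proof -
  define \<gamma> where "\<gamma> t = t *\<^sub>R p" for t :: real
  have d: "(\<gamma> has_vector_derivative p) (at t)" for t
    unfolding \<gamma>_def by (auto intro!: derivative_eq_intros)
  have vd: "vector_derivative \<gamma> (at t) = p" for t using d vector_derivative_at by blast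
  have pc: "\<gamma> piecewise_C1_differentiable_on {0..1}"
    by (rule C1_differentiable_imp_piecewise) (use d in \<open>auto simp: C1_differentiable_on_def intro!: exI[of _ "\<lambda>_. p"]\<close>)
  have nt: "norm (\<gamma> t) < 1" if "t \<in> {0..1}" for t
  proof -
    have "norm (\<gamma> t) = t * norm p" using that unfolding \<gamma>_def by simp
    also have "\<dots> \<le> norm p" using that by (simp add: mult_left_le_one_le)
    finally show ?thesis using assms by simp
  qed
  have img: "path_image \<gamma> \<subseteq> ball 0 1" unfolding path_image_def using nt by auto
  have th: "theta_form (\<gamma> t) p = 0" for t
    unfolding theta_form_def \<gamma>_def by (simp add: algebra_simps)
  have tp1: "\<bar>t * norm p\<bar> < 1" if "t \<in> {0..1}" for t
    using nt[OF that] unfolding \<gamma>_def by (simp add: abs_mult)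
  have eq: "sqrt (g_Btilde (\<gamma> t) p p) = 2 * norm p / (1 - (t * norm p)^2)" if "t \<in> {0..1}" for t
  proof -
    have a: "1 - (t * norm p)^2 > 0" using tp1[OF that]
      by (metis abs_square_less_1 diff_gt_0_iff_gt)
    have "g_Btilde (\<gamma> t) p p = (2 * norm p / (1 - (t * norm p)^2))^2"
      unfolding g_Btilde_def th using that
      by (simp add: \<gamma>_def power_divide power_mult_distrib power2_norm_eq_inner abs_of_nonneg)
    then show ?thesis using a by simp
  qed
  have ftc: "((\<lambda>t. 2 * norm p / (1 - (t * norm p)^2)) has_integral
      (2 * artanh (1 * norm p) - 2 * artanh (0 * norm p))) {0..1}"
  proof (rule fundamental_theorem_of_calculus)
    fix t :: real assume t: "t \<in> {0..1}"
    have "((\<lambda>t. 2 * artanh (t * norm p)) has_real_derivative 2 * norm p / (1 - (t * norm p)^2)) (at t within {0..1})"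
      using tp1[OF t]
      by (auto intro!: derivative_eq_intros DERIV_chain2[OF artanh_real_has_field_derivative])
    then show "((\<lambda>t. 2 * artanh (t * norm p)) has_vector_derivative 2 * norm p / (1 - (t * norm p)^2)) (at t within {0..1})"
      by (simp add: has_real_derivative_iff_has_vector_derivative)
  qed simp
  have "((\<lambda>t. sqrt (g_Btilde (\<gamma> t) (vector_derivative \<gamma> (at t)) (vector_derivative \<gamma> (at t))))
         has_integral 2 * artanh (norm p)) {0..1}"
  proof (rule has_integral_eq[OF _ ftc[simplified]])
    fix t :: real assume "t \<in> {0..1}"
    then show "2 * norm p / (1 - (t * norm p)^2) =
      sqrt (g_Btilde (\<gamma> t) (vector_derivative \<gamma> (at t)) (vector_derivative \<gamma> (at t)))"
      unfolding vd using eq by metis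
  qed
  moreover have "\<gamma> 0 = 0" "\<gamma> 1 = p" unfolding \<gamma>_def by simp_all
  ultimately show ?thesis unfolding admissible_lengths_def using pc img by blast
qed

lemma dist_eq:
  fixes p :: "complex^'n"
  assumes "norm p < 1"
  shows "dist_Btilde 0 p = 2 * artanh (norm p)"
  unfolding dist_Btilde_def
  by (rule cInf_eq_minimum[OF radial[OF assms]]) (use lower_bound in blast)

theorem lemma4p1:
  fixes R :: real
  assumes "R > 0"
  shows "geod_ball_Btilde (0 :: complex^'n) R = ball 0 (tanh (R / 2))"
proof -
  have iff: "2 * artanh x < R \<longleftrightarrow> x < tanh (R/2)" if "\<bar>x\<bar> < 1" for x :: real
  proof -
    have q: "(1 + x) / (1 - x) > 0" using that by (auto intro!: divide_pos_pos)
    have e: "exp (- 2 * artanh x) = (1 - x) / (1 + x)"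
      unfolding artanh_def using q by (simp add: exp_minus exp_ln)
    have ta: "tanh (artanh x) = x"
      unfolding tanh_real_altdef e using that by (auto simp: field_simps)
    have "2 * artanh x < R \<longleftrightarrow> artanh x < R/2" by linarith
    also have "\<dots> \<longleftrightarrow> tanh (artanh x) < tanh (R/2)" by (rule tanh_real_less_iff[symmetric])
    finally show ?thesis unfolding ta .
  qed
  have t1: "tanh (R/2) < 1" by (rule tanh_real_lt_1)
  show ?thesis
  proof (intro set_eqI iffI)
    fix p :: "complex^'n"
    assume "p \<in> geod_ball_Btilde 0 R"
    then have p1: "norm p < 1" and d: "dist_Btilde 0 p < R"
      unfolding geod_ball_Btilde_def by auto
    have "2 * artanh (norm p) < R" using d dist_eq[OF p1] by simp
    then have "norm p < tanh (R/2)" using iff[of "norm p"] p1 by simp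
    then show "p \<in> ball 0 (tanh (R/2))" by simp
  next
    fix p :: "complex^'n"
    assume "p \<in> ball 0 (tanh (R/2))"
    then have a: "norm p < tanh (R/2)" by simp
    then have p1: "norm p < 1" using t1 by linarith
    have "2 * artanh (norm p) < R" using iff[of "norm p"] p1 a by simp
    then show "p \<in> geod_ball_Btilde 0 R"
      unfolding geod_ball_Btilde_def using dist_eq[OF p1] p1 by simp
  qed
qed

end
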